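(* Let $k\ge 1$ be an integer and let $T$ be the complete rooted tree with root $r$ and depth $k$ in which every internal node has exactly $k^4$ children. Assign to each edge $e$ of $T$ an independent arrival time $r_e$ uniform on $[0,1]$. Then with probability at least $1-\frac{2k^{2k}}{e^{k^3/8}}$ there exists a bad subtree of $T$.
   Context: The height of a node $u$ of $T$ is the number of edges between $u$ and a closest leaf (so leaves have height $0$ and $r$ has height $k$). A child edge of $u$ is an edge from $u$ to one of its children. For $h=1,\dots,k$ let $I_h=((h-1)/k,\,h/k)$. A non-leaf node $u$ of height $h$ is bad if at least $k^2$ of its child edges $e$ have arrival time $r_e\in I_h$. A bad subtree is a subtree $T'$ of $T$ containing the root $r$ that is a full $k^2$-ary tree of height $k$ (every internal node of $T'$ has exactly $k^2$ children in $T'$, which are children in $T$, and all leaves of $T'$ are leaves of $T$) and all of whose internal nodes are bad. *)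

theory Defs
  imports "HOL-Probability.Probability"
begin

text \<open>Nodes of the complete rooted tree of depth k in which every internal node has
  exactly d children are represented as paths from the root: lists of child indices
  (each < d) of length at most k.  The root is the empty list, the children of u
  are u @ [i] for i < d, and leaves are the lists of length k.\<close>

definition tree_nodes :: "nat \<Rightarrow> nat \<Rightarrow> nat list set" where
  "tree_nodes d k = {u. length u \<le> k \<and> (\<forall>x\<in>set u. x < d)}"

text \<open>Edges are identified with their lower endpoint (every non-root node).\<close>
definition tree_edges :: "nat \<Rightarrow> nat \<Rightarrow> nat list set" where
  "tree_edges d k = {u \<in> tree_nodes d k. u \<noteq> []}"

text \<open>Height of a node = distance to a closest leaf; in a complete tree of depth k
  this is k minus the depth.\<close>
definition height :: "nat \<Rightarrow> nat list \<Rightarrow> nat" where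
  "height k u = k - length u"

definition Ival :: "nat \<Rightarrow> nat \<Rightarrow> real set" where
  "Ival k h = {(real h - 1) / real k <..< real h / real k}"

definition bad_node :: "nat \<Rightarrow> nat \<Rightarrow> (nat list \<Rightarrow> real) \<Rightarrow> nat list \<Rightarrow> bool" where
  "bad_node d k r u \<longleftrightarrow> u \<in> tree_nodes d k \<and> length u < k \<and>
     card {i. i < d \<and> r (u @ [i]) \<in> Ival k (height k u)} \<ge> k^2"

text \<open>A bad subtree: a set S of nodes of T, containing the root, closed under taking
  parents (so it is a rooted subtree), in which every node that is not a leaf of T
  has exactly k^2 children in S (so S is a full k^2-ary tree of height k whose leaves
  are leaves of T), and all internal nodes of S are bad.\<close>
definition bad_subtree :: "nat \<Rightarrow> nat \<Rightarrow> (nat list \<Rightarrow> real) \<Rightarrow> nat list set \<Rightarrow> bool" where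
  "bad_subtree d k r S \<longleftrightarrow>
     S \<subseteq> tree_nodes d k \<and> [] \<in> S \<and>
     (\<forall>u\<in>S. u \<noteq> [] \<longrightarrow> butlast u \<in> S) \<and>
     (\<forall>u\<in>S. length u < k \<longrightarrow>
        card {i. i < d \<and> u @ [i] \<in> S} = k^2 \<and> bad_node d k r u)"

definition arrival_space :: "nat \<Rightarrow> nat \<Rightarrow> (nat list \<Rightarrow> real) measure" where
  "arrival_space d k = PiM (tree_edges d k) (\<lambda>_. uniform_measure lborel {0..1::real})"

end

theory Submission
  imports Defs
begin

abbreviation "U01 \<equiv> uniform_measure lborel {0..1::real}"

lemma U01_prob: "prob_space U01"
  by (rule prob_space_uniform_measure) auto

lemma Ival_sub: assumes "1 \<le> h" "h \<le> k" shows "Ival k h \<subseteq> {0..1}"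
proof
  fix x assume "x \<in> Ival k h"
  then have a: "(real h - 1) / real k < x" "x < real h / real k" by (auto simp: Ival_def)
  have k: "real k > 0" using assms by simp
  have "(real h - 1) / real k \<ge> 0" using assms by simp
  moreover have "real h / real k \<le> 1" using assms k by (simp add: divide_le_eq_1)
  ultimately show "x \<in> {0..1}" using a by auto
qed

lemma measure_Ival: assumes "1 \<le> h" "h \<le> k" shows "measure U01 (Ival k h) = 1 / real k"
proof -
  have s: "Ival k h \<in> sets borel" by (simp add: Ival_def)
  have "measure U01 (Ival k h) = measure lborel ({0..1} \<inter> Ival k h) / measure lborel {0..1::real}"
    by (rule measure_uniform_measure) (simp_all add: s)
  also have "{0..1} \<inter> Ival k h = Ival k h" using Ival_sub[OF assms] by blast
  also have "measure lborel {0..1::real} = 1" by simp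
  also have "measure lborel (Ival k h) = real h / real k - (real h - 1) / real k"
    unfolding Ival_def by (rule measure_lborel_Ioo) (simp add: divide_right_mono)
  also have "real h / real k - (real h - 1) / real k = 1 / real k" by (simp add: diff_divide_distrib)
  finally show ?thesis by simp
qed

lemma integral_f: assumes "1 \<le> h" "h \<le> k"
  shows "(\<integral>y. (if y \<in> Ival k h then 1/2 else 1::real) \<partial>U01) = 1 - 1 / (2 * real k)"
proof -
  interpret prob_space U01 by (rule U01_prob)
  have s: "Ival k h \<in> sets U01" by (simp add: Ival_def)
  have fin: "emeasure U01 (Ival k h) < \<infinity>"
    using emeasure_finite[of "Ival k h"] by (simp only: less_top infinity_ennreal_def)
  have i: "integrable U01 (indicator (Ival k h) :: real \<Rightarrow> real)"
    by (rule integrable_real_indicator[OF s fin])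
  have "(\<integral>y. indicator (Ival k h) y \<partial>U01) = measure U01 (Ival k h \<inter> space U01)"
    by (rule Bochner_Integration.integral_indicator)
  also have "Ival k h \<inter> space U01 = Ival k h" by simp
  also have "measure U01 (Ival k h) = 1 / real k" by (rule measure_Ival[OF assms])
  finally have m: "(\<integral>y. indicator (Ival k h) y \<partial>U01) = 1 / real k" .
  have c: "(\<integral>y. 1 \<partial>U01) = (1::real)"
    by (simp only: lebesgue_integral_const prob_space real_scaleR_def mult_1_right)
  have "(\<integral>y. (if y \<in> Ival k h then 1/2 else 1::real) \<partial>U01) = (\<integral>y. 1 - indicator (Ival k h) y / 2 \<partial>U01)"
    by (intro Bochner_Integration.integral_cong) (simp_all add: indicator_def)
  also have "\<dots> = (\<integral>y. 1 \<partial>U01) - (\<integral>y. indicator (Ival k h) y / (2::real) \<partial>U01)"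
    by (rule Bochner_Integration.integral_diff[OF integrable_const integrable_divide_zero[OF i]])
  also have "(\<integral>y. indicator (Ival k h) y / (2::real) \<partial>U01) = (\<integral>y. indicator (Ival k h) y \<partial>U01) / 2"
    by (rule integral_divide_zero)
  also have "(\<integral>y. 1 \<partial>U01) - (\<integral>y. indicator (Ival k h) y \<partial>U01) / 2 = 1 - (1 / real k) / 2"
    by (simp only: m c)
  also have "1 - (1 / real k) / 2 = 1 - 1 / (2 * real k)" by simp
  finally show ?thesis .
qed

lemma finite_tree_nodes: "finite (tree_nodes d k)"
proof -
  have "tree_nodes d k = {xs. set xs \<subseteq> {..<d} \<and> length xs \<le> k}" by (auto simp: tree_nodes_def)
  then show ?thesis by (simp add: finite_lists_length_le)
qed

lemma finite_tree_edges: "finite (tree_edges d k)"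
  using finite_tree_nodes[of d k] by (simp add: tree_edges_def)

lemma U01_fin: "finite_measure U01"
  using U01_prob by (simp add: prob_space_def)

lemma U01_psf: "product_sigma_finite (\<lambda>_. U01)"
  by (simp add: product_sigma_finite_def U01_prob prob_space_imp_sigma_finite)

lemma arr_prob: "prob_space (arrival_space d k)"
  unfolding arrival_space_def by (rule prob_space_PiM) (rule U01_prob)

definition gfun :: "nat \<Rightarrow> nat \<Rightarrow> nat list \<Rightarrow> (nat list \<Rightarrow> real) \<Rightarrow> real" where
  "gfun d k u x = (\<Prod>e\<in>tree_edges d k. if e \<in> (\<lambda>i. u@[i]) ` {..<d} \<and> x e \<in> Ival k (height k u) then 1/2 else 1)"

lemma gfun_integrable: "integrable (arrival_space d k) (gfun d k u)"
proof -
  define A where "A = Ival k (height k u)"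
  define C where "C = (\<lambda>i. u@[i]) ` {..<d}"
  define f where "f = (\<lambda>e y. if e \<in> C \<and> y \<in> A then 1/2 else (1::real))"
  interpret ps: product_sigma_finite "\<lambda>_. U01" by (rule U01_psf)
  have Aset: "A \<in> sets borel" by (simp add: A_def Ival_def)
  have fm: "\<And>e. f e \<in> borel_measurable U01" using Aset by (simp add: f_def)
  have fi: "\<And>e. integrable U01 (f e)"
  proof -
    fix e
    show "integrable U01 (f e)"
      by (rule finite_measure.integrable_const_bound[where B=1])
         (auto simp: f_def U01_fin fm[unfolded f_def])
  qed
  have "integrable (PiM (tree_edges d k) (\<lambda>_. U01)) (\<lambda>x. \<Prod>e\<in>tree_edges d k. f e (x e))"
    using finite_tree_edges fi by (intro ps.product_integrable_prod) auto
  moreover have "(\<lambda>x. \<Prod>e\<in>tree_edges d k. f e (x e)) = gfun d k u"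
    by (intro ext) (simp add: gfun_def f_def A_def C_def)
  ultimately show ?thesis by (simp add: arrival_space_def)
qed

lemma node_fail:
  assumes u: "u \<in> tree_nodes d k" "length u < k"
  shows "measure (arrival_space d k) {x \<in> space (arrival_space d k). (1/2::real)^(k^2) \<le> gfun d k u x}
    \<le> 2^(k^2) * (1 - 1/(2*k))^d"
proof -
  define E where "E = tree_edges d k"
  define C where "C = (\<lambda>i. u@[i]) ` {..<d}"
  define A where "A = Ival k (height k u)"
  define f where "f = (\<lambda>e y. if e \<in> C \<and> y \<in> A then 1/2 else (1::real))"
  define q where "q = 1 - 1/(2*real k)"
  have hk: "1 \<le> height k u" "height k u \<le> k" using u by (auto simp: height_def)
  have CE: "C \<subseteq> E" using u by (auto simp: C_def E_def tree_nodes_def tree_edges_def)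
  have fin: "finite E" by (simp add: E_def finite_tree_edges)
  have cardC: "card C = d" unfolding C_def by (subst card_image) (auto simp: inj_on_def)
  interpret ps: product_sigma_finite "\<lambda>_. U01" by (rule U01_psf)
  have Aset: "A \<in> sets borel" by (simp add: A_def Ival_def)
  have fm: "\<And>e. f e \<in> borel_measurable U01" using Aset by (simp add: f_def)
  have fi: "\<And>e. integrable U01 (f e)"
  proof -
    fix e
    show "integrable U01 (f e)"
      by (rule finite_measure.integrable_const_bound[where B=1])
         (auto simp: f_def U01_fin fm[unfolded f_def])
  qed
  have fint: "\<And>e. integral\<^sup>L U01 (f e) = (if e \<in> C then q else 1)"
  proof -
    fix e show "integral\<^sup>L U01 (f e) = (if e \<in> C then q else 1)"
    proof (cases "e \<in> C")
      case True
      then show ?thesis using integral_f[OF hk] by (simp add: f_def q_def A_def)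
    next
      case False
      then show ?thesis using prob_space.prob_space[OF U01_prob]
        by (simp add: f_def del: measure_uniform_measure)
    qed
  qed
  have g_eq: "\<And>x. gfun d k u x = (\<Prod>e\<in>E. f e (x e))"
    by (simp add: gfun_def f_def E_def C_def A_def)
  have M_eq: "arrival_space d k = PiM E (\<lambda>_. U01)" by (simp add: arrival_space_def E_def)
  have int_g: "integrable (arrival_space d k) (gfun d k u)"
    unfolding M_eq g_eq using fin fi by (intro ps.product_integrable_prod) auto
  have intg: "(\<integral>x. gfun d k u x \<partial>arrival_space d k) = q ^ d"
  proof -
    have "(\<integral>x. gfun d k u x \<partial>arrival_space d k) = (\<Prod>e\<in>E. integral\<^sup>L U01 (f e))"
      unfolding M_eq g_eq using fin fi by (intro ps.product_integral_prod) auto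
    also have "\<dots> = (\<Prod>e\<in>E. if e \<in> C then q else 1)" by (simp add: fint)
    also have "\<dots> = q ^ card (E \<inter> C)" by (simp add: prod.If_cases fin)
    also have "E \<inter> C = C" using CE by auto
    finally show ?thesis using cardC by simp
  qed
  have nonneg: "\<And>x. 0 \<le> gfun d k u x" by (auto simp: gfun_def intro!: prod_nonneg)
  have "measure (arrival_space d k) {x \<in> space (arrival_space d k). gfun d k u x \<ge> (1/2::real)^(k^2)}
     \<le> (\<integral>x. gfun d k u x \<partial>arrival_space d k) / (1/2::real)^(k^2)"
    using int_g nonneg by (intro integral_Markov_inequality_measure[where A="space (arrival_space d k)"]) auto
  also have "\<dots> = 2^(k^2) * q^d" by (simp add: intg power_one_over)
  finally show ?thesis by (simp add: q_def)
qed


lemma comp_meas: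
  assumes "e \<in> tree_edges d k"
  shows "(\<lambda>r. r e) \<in> borel_measurable (arrival_space d k)"
proof -
  have "(\<lambda>r. r e) \<in> measurable (arrival_space d k) U01"
    unfolding arrival_space_def using assms by (rule measurable_component_singleton)
  moreover have "measurable (arrival_space d k) U01 = measurable (arrival_space d k) borel"
    by (rule measurable_cong_sets) simp_all
  ultimately show ?thesis by simp
qed

lemma pred_constI: "Measurable.pred M (\<lambda>x. P)"
  by (rule measurable_const) simp

lemma card_sum: "real (card {i. i < (d::nat) \<and> P i}) = (\<Sum>i<d. if P i then 1 else 0)"
proof -
  have "{i. i < d \<and> P i} = {i\<in>{..<d}. P i}" by auto
  then have "real (card {i. i < d \<and> P i}) = (\<Sum>i\<in>{i\<in>{..<d}. P i}. 1)" by simp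
  also have "\<dots> = (\<Sum>i<d. if P i then 1 else 0)" by (rule sum.inter_filter) simp
  finally show ?thesis .
qed

lemma bad_node_pred: "Measurable.pred (arrival_space d k) (\<lambda>r. bad_node d k r u)"
proof (cases "u \<in> tree_nodes d k \<and> length u < k")
  case True
  define A where "A = Ival k (height k u)"
  have Am: "A \<in> sets borel" by (simp add: A_def Ival_def)
  have eq: "bad_node d k r u \<longleftrightarrow> real (k^2) \<le> (\<Sum>i<d. indicator A (r (u@[i])))" for r
  proof -
    have "bad_node d k r u \<longleftrightarrow> real (k^2) \<le> real (card {i. i < d \<and> r (u@[i]) \<in> A})"
      using True by (simp add: bad_node_def A_def del: of_nat_power)
    also have "\<dots> \<longleftrightarrow> real (k^2) \<le> (\<Sum>i<d. indicator A (r (u@[i])))"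
      by (simp only: card_sum indicator_def of_bool_def)
    finally show ?thesis .
  qed
  have cm: "(\<lambda>r. r (u@[i])) \<in> borel_measurable (arrival_space d k)" if "i \<in> {..<d}" for i
    using True that by (intro comp_meas) (auto simp: tree_edges_def tree_nodes_def)
  have [measurable]: "(\<lambda>r. (\<Sum>i<d. indicator A (r (u@[i])) :: real)) \<in> borel_measurable (arrival_space d k)"
    using cm Am by (intro borel_measurable_sum) (auto intro: measurable_compose[OF _ borel_measurable_indicator])
  show ?thesis unfolding eq by measurable
next
  case False
  then have "\<And>r. \<not> bad_node d k r u" by (auto simp: bad_node_def)
  then show ?thesis by simp
qed

lemma bad_subtree_pred:
  assumes "S \<subseteq> tree_nodes d k"
  shows "Measurable.pred (arrival_space d k) (\<lambda>r. bad_subtree d k r S)"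
proof -
  have fS: "finite S" using assms finite_tree_nodes finite_subset by blast
  define P0 where "P0 = (S \<subseteq> tree_nodes d k \<and> [] \<in> S \<and>
     (\<forall>u\<in>S. u \<noteq> [] \<longrightarrow> butlast u \<in> S) \<and>
     (\<forall>u\<in>S. length u < k \<longrightarrow> card {i. i < d \<and> u @ [i] \<in> S} = k^2))"
  have eq: "bad_subtree d k r S \<longleftrightarrow> P0 \<and> (\<forall>u\<in>S. length u < k \<longrightarrow> bad_node d k r u)" for r
    unfolding bad_subtree_def P0_def by blast
  have [measurable]: "\<And>u. Measurable.pred (arrival_space d k) (\<lambda>r. bad_node d k r u)" by (rule bad_node_pred)
  show ?thesis unfolding eq
    by (intro pred_intros_logic(3) pred_intros_finite(3)[OF fS] pred_intros_logic(4) pred_constI bad_node_pred)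
qed

lemma Ev_sets: "{r \<in> space (arrival_space d k). \<exists>S. bad_subtree d k r S} \<in> sets (arrival_space d k)"
proof -
  have eq: "{r \<in> space (arrival_space d k). \<exists>S. bad_subtree d k r S} =
     {r \<in> space (arrival_space d k). \<exists>S\<in>Pow (tree_nodes d k). bad_subtree d k r S}"
    by (auto simp: bad_subtree_def)
  have [measurable]: "\<And>S. S \<in> Pow (tree_nodes d k) \<Longrightarrow> Measurable.pred (arrival_space d k) (\<lambda>r. bad_subtree d k r S)"
    using bad_subtree_pred by blast
  have "{r \<in> space (arrival_space d k). \<exists>S\<in>Pow (tree_nodes d k). bad_subtree d k r S}
     = (\<Union>S\<in>Pow (tree_nodes d k). {r \<in> space (arrival_space d k). bad_subtree d k r S})" by auto
  also have "\<dots> \<in> sets (arrival_space d k)"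
    using finite_tree_nodes[of d k] bad_subtree_pred[of _ d k]
    by (intro sets.finite_UN) (auto simp: pred_def)
  finally show ?thesis unfolding eq .
qed

lemma gfun_val:
  assumes u: "u \<in> tree_nodes d k" "length u < k"
  shows "gfun d k u x = (1/2) ^ card {i. i < d \<and> x (u@[i]) \<in> Ival k (height k u)}"
proof -
  define C where "C = (\<lambda>i. u@[i]) ` {..<d}"
  have CE: "C \<subseteq> tree_edges d k" using u by (auto simp: C_def tree_nodes_def tree_edges_def)
  have "gfun d k u x = (\<Prod>e\<in>{e\<in>tree_edges d k. e \<in> C \<and> x e \<in> Ival k (height k u)}. 1/2)"
    unfolding gfun_def C_def by (rule prod.inter_filter[symmetric]) (simp add: finite_tree_edges)
  also have "{e\<in>tree_edges d k. e \<in> C \<and> x e \<in> Ival k (height k u)} =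
      (\<lambda>i. u@[i]) ` {i. i < d \<and> x (u@[i]) \<in> Ival k (height k u)}"
    using CE by (auto simp: C_def)
  also have "(\<Prod>e\<in>(\<lambda>i. u@[i]) ` {i. i < d \<and> x (u@[i]) \<in> Ival k (height k u)}. (1/2::real))
     = (1/2) ^ card ((\<lambda>i. u@[i]) ` {i. i < d \<and> x (u@[i]) \<in> Ival k (height k u)})" by simp
  also have "card ((\<lambda>i. u@[i]) ` {i. i < d \<and> x (u@[i]) \<in> Ival k (height k u)}) = card {i. i < d \<and> x (u@[i]) \<in> Ival k (height k u)}"
    by (rule card_image) (auto simp: inj_on_def)
  finally show ?thesis .
qed


lemma geom_le: "(m::nat) \<ge> 2 \<Longrightarrow> (\<Sum>i\<le>n. m^i) \<le> m^(Suc n)"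
proof (induction n)
  case 0 then show ?case by simp
next
  case (Suc n)
  have "(\<Sum>i\<le>Suc n. m^i) = (\<Sum>i\<le>n. m^i) + m^(Suc n)" by simp
  also have "\<dots> \<le> 2 * m^(Suc n)" using Suc by simp
  also have "\<dots> \<le> m * m^(Suc n)" using Suc.prems by (intro mult_right_mono) auto
  finally show ?case by simp
qed

lemma small_k:
  assumes "k \<ge> 1" "k \<le> 2"
  shows "1 - 2 * real k ^ (2*k) / exp (real k ^ 3 / 8) \<le> 0"
proof -
  have e3: "exp (1::real) \<le> 3" by (rule exp_le)
  have "k = 1 \<or> k = 2" using assms by auto
  then show ?thesis
  proof
    assume k: "k = 1"
    have "exp (1/8::real) ^ 8 = exp 1" by (simp add: exp_of_nat_mult[symmetric])
    also have "\<dots> \<le> 2 ^ 8" using e3 by simp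
    finally have "exp (1/8::real) ^ Suc 7 \<le> 2 ^ Suc 7" by simp
    then have "exp (1/8::real) \<le> 2" by (rule power_le_imp_le_base) simp
    then show ?thesis using k by simp
  next
    assume k: "k = 2"
    have "exp (real 2 ^ 3 / 8) = exp (1::real)" by simp
    then show ?thesis using k e3 by simp
  qed
qed

lemma numeric:
  assumes k: "k \<ge> 3"
  shows "real k ^ (2*k) * (2^(k^2) * (1 - 1/(2*real k))^(k^4)) \<le> 2 * real k ^ (2*k) / exp (real k ^ 3 / 8)"
proof -
  have kpos: "real k > 0" using k by simp
  have q0: "0 \<le> 1 - 1/(2*real k)" using k by (simp add: field_simps)
  have "1 - 1/(2*real k) \<le> exp (-(1/(2*real k)))" using exp_ge_add_one_self[of "-(1/(2*real k))"] by simp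
  then have "(1 - 1/(2*real k))^(k^4) \<le> exp (-(1/(2*real k)))^(k^4)" using q0 by (rule power_mono)
  also have "\<dots> = exp (real (k^4) * (-(1/(2*real k))))" by (simp only: exp_of_nat_mult)
  also have "real (k^4) * (-(1/(2*real k))) = - (real k ^ 3 / 2)" using kpos
    by (simp add: field_simps eval_nat_numeral)
  finally have q: "(1 - 1/(2*real k))^(k^4) \<le> exp (- (real k ^ 3 / 2))" .
  have "(2::real)^(k^2) \<le> exp 1 ^ (k^2)" using exp_ge_add_one_self[of 1] by (intro power_mono) auto
  also have "\<dots> = exp (real (k^2))" by (simp add: exp_of_nat_mult[symmetric])
  finally have t: "(2::real)^(k^2) \<le> exp (real k ^ 2)" by simp
  have "(2::real)^(k^2) * (1 - 1/(2*real k))^(k^4) \<le> exp (real k ^ 2) * exp (- (real k ^ 3 / 2))"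
    using t q q0 by (intro mult_mono) auto
  also have "\<dots> = exp (real k ^ 2 - real k ^ 3 / 2)" by (simp add: exp_add[symmetric])
  also have "\<dots> \<le> exp (- (real k ^ 3 / 8))"
  proof -
    have "8 * real k ^ 2 \<le> 3 * real k ^ 3"
    proof -
      have "8 * real k ^ 2 \<le> (3 * real k) * real k ^ 2" using k by (intro mult_right_mono) auto
      then show ?thesis by (simp add: power_def eval_nat_numeral algebra_simps)
    qed
    then show ?thesis by simp
  qed
  also have "\<dots> = 1 / exp (real k ^ 3 / 8)" by (simp add: exp_minus field_simps)
  finally have B: "(2::real)^(k^2) * (1 - 1/(2*real k))^(k^4) \<le> 1 / exp (real k ^ 3 / 8)" .
  have "real k ^ (2*k) * (2^(k^2) * (1 - 1/(2*real k))^(k^4)) \<le> real k ^ (2*k) * (1 / exp (real k ^ 3 / 8))"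
    using B by (intro mult_left_mono) auto
  also have "\<dots> = real k ^ (2*k) / exp (real k ^ 3 / 8)" by simp
  also have "\<dots> \<le> 2 * real k ^ (2*k) / exp (real k ^ 3 / 8)" by (intro divide_right_mono) auto
  finally show ?thesis .
qed


theorem mainTheorem4:
  fixes k :: nat
  assumes "k \<ge> 1"
  shows "measure (arrival_space (k^4) k)
           {r \<in> space (arrival_space (k^4) k). \<exists>S. bad_subtree (k^4) k r S}
         \<ge> 1 - 2 * real k ^ (2*k) / exp (real k ^ 3 / 8)"
proof (cases "k \<le> 2")
  case True
  then show ?thesis using small_k[OF assms True] by (meson measure_nonneg order_trans)
next
  case False
  then have k3: "k \<ge> 3" by simp
  define d where "d = k^4"
  define M where "M = arrival_space d k"
  define Ev where "Ev = {r \<in> space M. \<exists>S. bad_subtree d k r S}"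
  define U where "U = {u. set u \<subseteq> {..<k^2} \<and> length u \<le> k - 1}"
  define G where "G = (\<lambda>u. {x \<in> space M. (1/2::real)^(k^2) \<le> gfun d k u x})"
  define B where "B = (2::real)^(k^2) * (1 - 1/(2*real k))^d"
  define S0 where "S0 = {u. set u \<subseteq> {..<k^2} \<and> length u \<le> k}"
  interpret P: prob_space M unfolding M_def by (rule arr_prob)
  have k2d: "k^2 \<le> d" unfolding d_def using k3 by (simp add: power_increasing)
  have Utn: "\<And>u. u \<in> U \<Longrightarrow> u \<in> tree_nodes d k \<and> length u < k"
    using k3 k2d by (auto simp: U_def tree_nodes_def)
  have finU: "finite U" unfolding U_def by (rule finite_lists_length_le) simp
  have k2: "2 \<le> k^2"
  proof -
    have "3*1 \<le> k*k" using k3 by (intro mult_le_mono) auto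
    then show ?thesis by (simp add: power2_eq_square)
  qed
  have cardU: "card U \<le> k^(2*k)"
  proof -
    have "card U = (\<Sum>i\<le>k-1. (k^2)^i)" unfolding U_def by (subst card_lists_length_le) simp_all
    also have "\<dots> \<le> (k^2)^(Suc (k-1))" using k2 by (rule geom_le)
    also have "(k^2)^(Suc (k-1)) = k^(2*k)" using k3 by (simp add: power_mult)
    finally show ?thesis .
  qed
  have gm[measurable]: "\<And>u. gfun d k u \<in> borel_measurable M"
    unfolding M_def by (rule borel_measurable_integrable) (rule gfun_integrable)
  have Gs: "\<And>u. G u \<in> sets M" unfolding G_def by measurable
  have GB: "\<And>u. u \<in> U \<Longrightarrow> measure M (G u) \<le> B"
  proof -
    fix u assume "u \<in> U"
    then show "measure M (G u) \<le> B"
      unfolding G_def M_def B_def by (intro node_fail) (use Utn in auto)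
  qed
  have sub: "space M - (\<Union>u\<in>U. G u) \<subseteq> Ev"
  proof
    fix x assume x: "x \<in> space M - (\<Union>u\<in>U. G u)"
    have "bad_subtree d k x S0" unfolding bad_subtree_def
    proof (intro conjI ballI impI)
      show "S0 \<subseteq> tree_nodes d k" using k2d by (auto simp: S0_def tree_nodes_def)
      show "[] \<in> S0" by (simp add: S0_def)
    next
      fix u assume "u \<in> S0" "u \<noteq> []"
      then show "butlast u \<in> S0" by (auto simp: S0_def dest: in_set_butlastD)
    next
      fix u assume u: "u \<in> S0" "length u < k"
      have "{i. i < d \<and> u @ [i] \<in> S0} = {..<k^2}" using u k2d by (auto simp: S0_def)
      then show "card {i. i < d \<and> u @ [i] \<in> S0} = k^2" by simp
      have uU: "u \<in> U" using u by (auto simp: S0_def U_def)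
      then have "x \<notin> G u" using x by auto
      then have lt: "gfun d k u x < (1/2::real)^(k^2)" using x by (auto simp: G_def)
      have "gfun d k u x = (1/2) ^ card {i. i < d \<and> x (u@[i]) \<in> Ival k (height k u)}"
        using Utn[OF uU] by (intro gfun_val) auto
      then have "k^2 < card {i. i < d \<and> x (u@[i]) \<in> Ival k (height k u)}"
        using lt by (simp add: power_strict_decreasing_iff)
      then show "bad_node d k x u" using Utn[OF uU] by (simp add: bad_node_def)
    qed
    then show "x \<in> Ev" using x by (auto simp: Ev_def)
  qed
  have UGs: "(\<Union>u\<in>U. G u) \<in> sets M" using finU Gs by auto
  have EvS: "Ev \<in> sets M" unfolding Ev_def M_def by (rule Ev_sets)
  have "1 - real (card U) * B \<le> 1 - (\<Sum>u\<in>U. measure M (G u))"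
    using GB sum_bounded_above[of U "\<lambda>u. measure M (G u)" B] by simp
  also have "\<dots> \<le> 1 - measure M (\<Union>u\<in>U. G u)"
    using P.finite_measure_subadditive_finite[OF finU] Gs by auto
  also have "\<dots> = measure M (space M - (\<Union>u\<in>U. G u))" using P.prob_compl[OF UGs] by simp
  also have "\<dots> \<le> measure M Ev" using sub EvS by (rule P.finite_measure_mono)
  finally have main: "1 - real (card U) * B \<le> measure M Ev" .
  have "real (card U) * B \<le> real k ^ (2*k) * B"
  proof (rule mult_right_mono)
    show "real (card U) \<le> real k ^ (2*k)" using cardU by (metis of_nat_le_iff of_nat_power)
    have "0 \<le> 1 - 1/(2*real k)" using k3 by (simp add: field_simps)
    then show "0 \<le> B" unfolding B_def by simp
  qed
  also have "\<dots> \<le> 2 * real k ^ (2*k) / exp (real k ^ 3 / 8)" unfolding B_def d_def using numeric[OF k3] .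
  finally have fin2: "real (card U) * B \<le> 2 * real k ^ (2*k) / exp (real k ^ 3 / 8)" .
  have final: "1 - 2 * real k ^ (2*k) / exp (real k ^ 3 / 8) \<le> measure M Ev"
    using main fin2 by linarith
  then show ?thesis unfolding M_def Ev_def d_def .
qed

end
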